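(* Let $\beta$ be a non-negative integer and $k$ a positive integer. If $\beta+k\equiv 0 \pmod{q-1}$, then $L(\chi_t^\beta,-k)=0$; if $\beta+k\not\equiv 0\pmod{q-1}$, then $L(\chi_t^\beta,-k)\neq 0$. Moreover, whenever $\beta+k\equiv 0\pmod{q-1}$, the zero is simple: the derivative $\frac{\partial}{\partial x}z(\chi_t^\beta,x,-k)$ does not vanish at $x=1$.
   Context: Let $q$ be a power of a prime $p$, $A=\mathbb{F}_q[\theta]$, and $A_+(d)$ the set of monic polynomials in $A$ of degree $d$. Let $t$ be an indeterminate and $\chi_t:A\to\mathbb{F}_q[t]$ the $\mathbb{F}_q$-algebra morphism with $\theta\mapsto t$; $\chi_t(a)^0:=1$. For non-negative integers $\beta,k,d$ let $S_d(\chi_t^\beta,k):=\sum_{a\in A_+(d)}\chi_t(a)^\beta a^k\in A[t]$. It is known that $S_d(\chi_t^\beta,k)=0$ for $d$ sufficiently large, so the special polynomial $z(\chi_t^\beta,x,-k):=\sum_{d\ge0}x^{-d}S_d(\chi_t^\beta,k)$ lies in $A[t][x^{-1}]$. Define $L(\chi_t^\beta,-k):=z(\chi_t^\beta,1,-k)\in A[t]$ (the value of Pellarin's $L$-series at $-k$). *)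

theory Defs
  imports "HOL-Computational_Algebra.Polynomial" "HOL-Library.Cardinality"
begin

(* F_q is modelled by a finite field type 'a (q = CARD('a)).
   A = F_q[theta] is 'a poly.  A[t] is ('a poly) poly: the OUTER variable is t,
   the coefficients lie in A.  Polynomials in x^{-1} over A[t] are
   ('a poly poly) poly, the outer variable being y = x^{-1}. *)

definition monic_deg :: "nat \<Rightarrow> ('a::field) poly set" where
  "monic_deg d = {a. lead_coeff a = 1 \<and> degree a = d}"

text \<open>chi_t : A -> F_q[t] (subset of A[t]), theta |-> t.\<close>
definition chi_t :: "('a::field) poly \<Rightarrow> 'a poly poly" where
  "chi_t a = map_poly (\<lambda>c. [:c:]) a"

definition S_d :: "nat \<Rightarrow> nat \<Rightarrow> nat \<Rightarrow> ('a::{field,finite}) poly poly" where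
  "S_d d \<beta> k = (\<Sum>a\<in>monic_deg d. chi_t a ^ \<beta> * [:a ^ k:])"

text \<open>Special polynomial z(chi_t^beta, x, -k) = sum_d x^{-d} S_d, as a polynomial
  in the variable y = x^{-1} (S_d vanishes for all large d, so the support is finite).\<close>
definition z_poly :: "nat \<Rightarrow> nat \<Rightarrow> ('a::{field,finite}) poly poly poly" where
  "z_poly \<beta> k = (\<Sum>d\<in>{d. (S_d d \<beta> k :: 'a poly poly) \<noteq> 0}. monom (S_d d \<beta> k) d)"

definition L_val :: "nat \<Rightarrow> nat \<Rightarrow> ('a::{field,finite}) poly poly" where
  "L_val \<beta> k = poly (z_poly \<beta> k) 1"

text \<open>Value at x = 1 of d/dx z(chi_t^beta, x, -k).  Since z(x) = Z(x^{-1}) with Z = z_poly,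
  the chain rule gives d/dx z(x) = -x^{-2} Z'(x^{-1}), whose value at x = 1 is -Z'(1).\<close>
definition z_deriv_at_1 :: "nat \<Rightarrow> nat \<Rightarrow> ('a::{field,finite}) poly poly" where
  "z_deriv_at_1 \<beta> k = - poly (pderiv (z_poly \<beta> k)) 1"

end

theory Submission
  imports Defs
begin

lemma card_zero_field: "of_nat CARD('a::{field,finite}) = (0::'a)"
proof -
  have "(\<Sum>x\<in>(UNIV::'a set). x + 1) = (\<Sum>x\<in>UNIV. x)"
    by (rule sum.reindex_bij_witness[of _ "\<lambda>x. x - 1" "\<lambda>x. x + 1"]) auto
  then have "(\<Sum>x\<in>(UNIV::'a set). (1::'a)) = 0" by (simp add: sum.distrib)
  then show ?thesis by simp
qed

lemma card_ge2: "CARD('a::{field,finite}) \<ge> 2"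
proof -
  have "{0::'a, 1} \<subseteq> UNIV" by auto
  then have "card {0::'a,1} \<le> CARD('a)" by (intro card_mono) auto
  then show ?thesis by simp
qed

lemma fermat_field:
  fixes c :: "'a::{field,finite}"
  assumes "c \<noteq> 0" shows "c ^ (CARD('a) - 1) = 1"
proof -
  let ?U = "UNIV - {0::'a}"
  have "(\<Prod>x\<in>?U. c * x) = (\<Prod>x\<in>?U. x)"
    by (rule prod.reindex_bij_witness[of _ "\<lambda>x. x / c" "\<lambda>x. c * x"]) (use assms in auto)
  moreover have "(\<Prod>x\<in>?U. c * x) = c ^ card ?U * (\<Prod>x\<in>?U. x)"
    by (simp add: prod.distrib)
  moreover have "(\<Prod>x\<in>?U. x) \<noteq> 0" by simp
  moreover have "card ?U = CARD('a) - 1" by (simp add: card_Diff_subset)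
  ultimately show ?thesis by simp
qed

lemma sum_pow_small:
  fixes m :: nat
  assumes "0 < m" "m < CARD('a::{field,finite}) - 1"
  shows "(\<Sum>c\<in>(UNIV::'a set). c ^ m) = 0"
proof -
  define p :: "'a poly" where "p = monom 1 m - 1"
  have cm: "coeff p m = 1" using assms by (simp add: p_def)
  then have pnz: "p \<noteq> 0" by auto
  have "degree p \<le> m" unfolding p_def using assms
    by (intro degree_le) (auto simp: coeff_monom)
  moreover have "m \<le> degree p" using cm by (intro le_degree) simp
  ultimately have dp: "degree p = m" by simp
  have "card {x. poly p x = 0} \<le> m" using card_poly_roots_bound[OF pnz] dp by simp
  then have lt: "card {x. poly p x = 0} < card (UNIV - {0::'a})" using assms by (simp add: card_Diff_subset)
  have "\<not> (UNIV - {0::'a}) \<subseteq> {x. poly p x = 0}"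
  proof
    assume "(UNIV - {0::'a}) \<subseteq> {x. poly p x = 0}"
    then have "card (UNIV - {0::'a}) \<le> card {x. poly p x = 0}" by (intro card_mono) auto
    with lt show False by simp
  qed
  then obtain g where g: "g \<in> UNIV - {0::'a}" "g \<notin> {x. poly p x = 0}" by blast
  then have g1: "g ^ m \<noteq> 1" "g \<noteq> 0" by (auto simp: p_def poly_monom)
  have "(\<Sum>c\<in>(UNIV::'a set). (g*c) ^ m) = (\<Sum>c\<in>UNIV. c ^ m)"
    by (rule sum.reindex_bij_witness[of _ "\<lambda>x. x / g" "\<lambda>x. g * x"]) (use g1 in auto)
  then have "g^m * (\<Sum>c\<in>(UNIV::'a set). c ^ m) = 1 * (\<Sum>c\<in>UNIV. c ^ m)"
    by (simp add: power_mult_distrib sum_distrib_left)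
  then show ?thesis using g1 by (metis mult_cancel_right)
qed

lemma sum_pow_nondvd:
  fixes n :: nat
  assumes "0 < n" "\<not> (CARD('a::{field,finite}) - 1) dvd n"
  shows "(\<Sum>c\<in>(UNIV::'a set). c ^ n) = 0"
proof -
  let ?q = "CARD('a) - 1"
  define r where "r = n mod ?q"
  have q: "?q > 0" using card_ge2[where 'a='a] by simp
  have r: "0 < r" "r < ?q" using assms q unfolding r_def by (auto simp: dvd_eq_mod_eq_0)
  have "c ^ n = c ^ r" for c :: 'a
  proof (cases "c = 0")
    case True then show ?thesis using assms r by (simp add: zero_power)
  next
    case False
    have "n = ?q * (n div ?q) + r" unfolding r_def by simp
    then have "c ^ n = (c ^ ?q) ^ (n div ?q) * c ^ r" by (metis power_add power_mult)
    then show ?thesis using fermat_field[OF False] by simp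
  qed
  then show ?thesis using sum_pow_small[OF r] by simp
qed

lemma sum_pow_dvd:
  fixes n :: nat
  assumes "0 < n" "(CARD('a::{field,finite}) - 1) dvd n"
  shows "(\<Sum>c\<in>(UNIV::'a set). c ^ n) = -1"
proof -
  let ?q = "CARD('a) - 1"
  have "c ^ n = (if c = 0 then 0 else 1)" for c :: 'a
  proof (cases "c = 0")
    case True then show ?thesis using assms by simp
  next
    case False
    obtain s where "n = ?q * s" using assms by blast
    then show ?thesis using fermat_field[OF False] False by (simp add: power_mult)
  qed
  then have "(\<Sum>c\<in>(UNIV::'a set). c ^ n) = (\<Sum>c\<in>(UNIV::'a set). (if c = 0 then 0 else (1::'a)))"
    by (intro sum.cong) auto
  also have "\<dots> = (\<Sum>c\<in>(UNIV::'a set) - {0}. (1::'a))"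
    by (rule sum.mono_neutral_cong_right) auto
  also have "\<dots> = of_nat (CARD('a) - 1)" by (simp add: card_Diff_subset)
  also have "\<dots> = -1" using card_ge2[where 'a='a] card_zero_field[where 'a='a] by (simp add: of_nat_diff)
  finally show ?thesis .
qed

definition cc :: "'a::field \<Rightarrow> 'a poly poly" where "cc c = [:[:c:]:]"

lemma cc_add[simp]: "cc (x + y) = cc x + cc y" by (simp add: cc_def)
lemma cc_mult[simp]: "cc (x * y) = cc x * cc y" by (simp add: cc_def)
lemma cc_0[simp]: "cc 0 = 0" by (simp add: cc_def)
lemma cc_1[simp]: "cc 1 = 1" by (simp add: cc_def one_pCons)
lemma cc_power[simp]: "cc (x ^ m) = cc x ^ m" by (induction m) simp_all
lemma cc_sum[simp]: "cc (sum f A) = (\<Sum>a\<in>A. cc (f a))" by (induction A rule: infinite_finite_induct) simp_all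
lemma cc_of_nat[simp]: "cc (of_nat n) = of_nat n" by (induction n) simp_all
lemma cc_uminus[simp]: "cc (- x) = - cc x" by (simp add: cc_def)
lemma cc_eq0[simp]: "cc x = 0 \<longleftrightarrow> x = 0" by (simp add: cc_def)

definition lin :: "('a::field poly \<Rightarrow> 'a poly poly) \<Rightarrow> bool" where
  "lin e \<longleftrightarrow> (\<forall>a b. e (a + b) = e a + e b) \<and> (\<forall>c a. e (smult c a) = cc c * e a)"

inductive Pol :: "nat \<Rightarrow> ('a::field poly \<Rightarrow> 'a poly poly) \<Rightarrow> bool" where
  Pconst: "Pol n (\<lambda>_. K)"
| Pmult: "lin e \<Longrightarrow> Pol n F \<Longrightarrow> Pol (Suc n) (\<lambda>b. e b * F b)"
| Padd: "Pol n F \<Longrightarrow> Pol n G \<Longrightarrow> Pol n (\<lambda>b. F b + G b)"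
| Pmono: "Pol n F \<Longrightarrow> Pol (Suc n) F"

lemma Pol_mono_le: "Pol n F \<Longrightarrow> n \<le> m \<Longrightarrow> Pol m F"
  by (induction m) (auto simp: le_Suc_eq intro: Pmono)

lemma Pol_cmult: "Pol n F \<Longrightarrow> Pol n (\<lambda>b. K * F b)"
proof (induction rule: Pol.induct)
  case (Pconst n K') then show ?case by (rule Pol.Pconst)
next
  case (Pmult e n F)
  have "(\<lambda>b. K * (e b * F b)) = (\<lambda>b. e b * (K * F b))" by (simp add: ac_simps)
  then show ?case using Pmult by (simp add: Pol.Pmult)
next
  case (Padd n F G) then show ?case by (simp add: distrib_left Pol.Padd)
next
  case (Pmono n F) then show ?case by (simp add: Pol.Pmono)
qed

lemma lin_monom: "lin e \<Longrightarrow> e (monom c D) = cc c * e (monom 1 D)"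
  by (metis lin_def mult.right_neutral smult_monom)

lemma coeff_lin_mult: "coeff ([:x, y:] * p) m = x * coeff p m + (if m = 0 then 0 else y * coeff p (m - 1))"
  by (cases m) (simp_all add: mult_pCons_left)

lemma Pol_decomp:
  assumes "Pol n F"
  shows "\<exists>Q. (\<forall>b. degree (Q b) \<le> n) \<and> (\<forall>m. Pol (n - m) (\<lambda>b. coeff (Q b) m))
            \<and> (\<forall>b c. F (b + monom c D) = poly (Q b) (cc c))"
  using assms
proof (induction rule: Pol.induct)
  case (Pconst n K)
  show ?case
    by (rule exI[of _ "\<lambda>b. [:K:]"]) (auto intro: Pol.Pconst)
next
  case (Pmult e n F)
  then obtain Q where Q: "\<forall>b. degree (Q b) \<le> n" "\<forall>m. Pol (n - m) (\<lambda>b. coeff (Q b) m)"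
    "\<forall>b c. F (b + monom c D) = poly (Q b) (cc c)" by blast
  define y where "y = e (monom 1 D)"
  define Q' where "Q' = (\<lambda>b. [:e b, y:] * Q b)"
  have "degree (Q' b) \<le> Suc n" for b
  proof -
    have "degree (Q' b) \<le> degree [:e b, y:] + degree (Q b)" unfolding Q'_def by (rule degree_mult_le)
    moreover have "degree [:e b, y:] \<le> 1" by simp
    ultimately show ?thesis using Q(1) by (metis add_le_mono plus_1_eq_Suc order.trans)
  qed
  moreover have "Pol (Suc n - m) (\<lambda>b. coeff (Q' b) m)" for m
  proof (cases m)
    case 0
    then show ?thesis using Pol.Pmult[OF Pmult(1) Q(2)[rule_format, of 0]]
      by (simp add: Q'_def coeff_lin_mult)
  next
    case (Suc m')
    show ?thesis
    proof (cases "m' < n")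
      case True
      have "Pol (Suc (n - Suc m')) (\<lambda>b. e b * coeff (Q b) (Suc m'))"
        using Pol.Pmult[OF Pmult(1) Q(2)[rule_format, of "Suc m'"]] .
      moreover have "Pol (n - m') (\<lambda>b. y * coeff (Q b) m')"
        using Pol_cmult[OF Q(2)[rule_format, of m']] .
      moreover have "Suc (n - Suc m') = n - m'" using True by simp
      ultimately have "Pol (n - m') (\<lambda>b. e b * coeff (Q b) (Suc m') + y * coeff (Q b) m')"
        by (intro Pol.Padd) auto
      then show ?thesis using Suc by (simp add: Q'_def coeff_lin_mult)
    next
      case False
      have "(\<lambda>b. coeff (Q' b) m) = (\<lambda>b. y * coeff (Q b) m')"
      proof
        fix b
        have "coeff (Q b) (Suc m') = 0" using Q(1) False by (intro coeff_eq_0) (meson not_less le_less_trans less_Suc_eq_le order.trans)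
        then show "coeff (Q' b) m = y * coeff (Q b) m'" using Suc by (simp add: Q'_def coeff_lin_mult)
      qed
      moreover have "Pol (n - m') (\<lambda>b. y * coeff (Q b) m')"
        using Pol_cmult[OF Q(2)[rule_format, of m']] .
      ultimately show ?thesis using Suc by simp
    qed
  qed
  moreover have "e (b + monom c D) * F (b + monom c D) = poly (Q' b) (cc c)" for b c
  proof -
    have "e (b + monom c D) = e b + e (monom c D)" using Pmult(1) unfolding lin_def by blast
    also have "\<dots> = e b + cc c * y" unfolding y_def by (rule arg_cong[where f="\<lambda>x. e b + x"], rule lin_monom[OF Pmult(1)])
    finally have e1: "e (b + monom c D) = e b + cc c * y" .
    have "poly (Q' b) (cc c) = (e b + cc c * y) * poly (Q b) (cc c)"
      unfolding Q'_def by (simp only: poly_mult poly_pCons poly_0) simp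
    then show ?thesis using e1 Q(3) by simp
  qed
  ultimately show ?case by (intro exI[of _ Q']) simp
next
  case (Padd n F G)
  then obtain Q1 Q2 where Q1: "\<forall>b. degree (Q1 b) \<le> n" "\<forall>m. Pol (n - m) (\<lambda>b. coeff (Q1 b) m)"
    "\<forall>b c. F (b + monom c D) = poly (Q1 b) (cc c)"
    and Q2: "\<forall>b. degree (Q2 b) \<le> n" "\<forall>m. Pol (n - m) (\<lambda>b. coeff (Q2 b) m)"
    "\<forall>b c. G (b + monom c D) = poly (Q2 b) (cc c)" by blast
  have "\<forall>b. degree (Q1 b + Q2 b) \<le> n" using Q1(1) Q2(1) degree_add_le by blast
  moreover have "\<forall>m. Pol (n - m) (\<lambda>b. coeff (Q1 b + Q2 b) m)"
  proof
    fix m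
    have "Pol (n - m) (\<lambda>b. coeff (Q1 b) m + coeff (Q2 b) m)"
      using Q1(2) Q2(2) by (intro Pol.Padd) blast+
    then show "Pol (n - m) (\<lambda>b. coeff (Q1 b + Q2 b) m)" by (simp only: coeff_add)
  qed
  moreover have "\<forall>b c. F (b + monom c D) + G (b + monom c D) = poly (Q1 b + Q2 b) (cc c)"
    using Q1(3) Q2(3) by (simp only: poly_add) simp
  ultimately show ?case by (intro exI[of _ "\<lambda>b. Q1 b + Q2 b"]) simp
next
  case (Pmono n F)
  then obtain Q where Q: "\<forall>b. degree (Q b) \<le> n" "\<forall>m. Pol (n - m) (\<lambda>b. coeff (Q b) m)"
    "\<forall>b c. F (b + monom c D) = poly (Q b) (cc c)" by blast
  have "\<forall>m. Pol (Suc n - m) (\<lambda>b. coeff (Q b) m)"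
  proof
    fix m show "Pol (Suc n - m) (\<lambda>b. coeff (Q b) m)"
      using Q(2) by (rule allE) (erule Pol_mono_le, simp)
  qed
  moreover have "\<forall>b. degree (Q b) \<le> Suc n" using Q(1) le_SucI by blast
  ultimately show ?case using Q(3) by (intro exI[of _ Q]) simp
qed

definition PP :: "nat \<Rightarrow> 'a::field poly set" where "PP D = {a. \<forall>i\<ge>D. coeff a i = 0}"

lemma PP_0: "PP 0 = {0}" by (auto simp: PP_def poly_eq_iff)

lemma PP_Suc: "PP (Suc D) = (\<lambda>(b,c). b + monom c D) ` (PP D \<times> UNIV)"
proof (rule equalityI[rotated])
  show "(\<lambda>(b,c). b + monom c D) ` (PP D \<times> UNIV) \<subseteq> PP (Suc D)"
    by (auto simp: PP_def coeff_monom)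
next
  show "PP (Suc D) \<subseteq> (\<lambda>(b,c). b + monom c D) ` (PP D \<times> UNIV)"
  proof
    fix a assume a: "a \<in> PP (Suc D)"
    have "a - monom (coeff a D) D \<in> PP D" using a
      by (auto simp: PP_def coeff_monom)
    moreover have "a = (a - monom (coeff a D) D) + monom (coeff a D) D" by simp
    ultimately show "a \<in> (\<lambda>(b,c). b + monom c D) ` (PP D \<times> UNIV)"
      by (intro image_eqI[of _ _ "(a - monom (coeff a D) D, coeff a D)"]) auto
  qed
qed

lemma PP_inj: "inj_on (\<lambda>(b,c). b + monom c D) (PP D \<times> UNIV)"
proof (rule inj_onI, clarify)
  fix b c b' c' assume b: "b \<in> PP D" "b' \<in> PP D" and eq: "b + monom c D = b' + monom c' D"
  have "coeff (b + monom c D) D = coeff (b' + monom c' D) D" using eq by simp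
  then have "c = c'" using b by (simp add: PP_def)
  then show "b = b' \<and> c = c'" using eq by simp
qed

lemma finite_PP: "finite (PP D :: 'a::{field,finite} poly set)"
  by (induction D) (simp_all add: PP_0 PP_Suc)

lemma sum_PP_Suc:
  "sum f (PP (Suc D) :: 'a::{field,finite} poly set) = (\<Sum>b\<in>PP D. \<Sum>c\<in>UNIV. f (b + monom c D))"
proof -
  have "sum f (PP (Suc D)) = (\<Sum>x\<in>PP D \<times> UNIV. f ((\<lambda>(b,c). b + monom c D) x))"
    unfolding PP_Suc by (rule sum.reindex[OF PP_inj, unfolded comp_def])
  also have "\<dots> = (\<Sum>b\<in>PP D. \<Sum>c\<in>UNIV. f (b + monom c D))"
    by (simp add: sum.cartesian_product split_def)
  finally show ?thesis .
qed

lemma poly_le: fixes p :: "'a::comm_ring_1 poly" assumes "degree p \<le> n" shows "poly p x = (\<Sum>i\<le>n. coeff p i * x ^ i)"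
proof -
  have "poly p x = (\<Sum>i\<le>degree p. coeff p i * x ^ i)" by (rule poly_altdef)
  also have "\<dots> = (\<Sum>i\<le>n. coeff p i * x ^ i)"
    by (rule sum.mono_neutral_left) (use assms in \<open>auto simp: coeff_eq_0\<close>)
  finally show ?thesis .
qed

lemma sum_swap3: fixes g :: "'b \<Rightarrow> 'd \<Rightarrow> 'a::comm_ring_1" shows "(\<Sum>b\<in>B. \<Sum>c\<in>C. \<Sum>m\<in>M. g b m * h c m) = (\<Sum>m\<in>M. (\<Sum>b\<in>B. g b m) * (\<Sum>c\<in>C. h c m))"
proof -
  have "(\<Sum>b\<in>B. \<Sum>c\<in>C. \<Sum>m\<in>M. g b m * h c m) = (\<Sum>b\<in>B. \<Sum>m\<in>M. \<Sum>c\<in>C. g b m * h c m)"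
    by (rule sum.cong[OF refl], rule sum.swap)
  also have "\<dots> = (\<Sum>m\<in>M. \<Sum>b\<in>B. \<Sum>c\<in>C. g b m * h c m)" by (rule sum.swap)
  also have "\<dots> = (\<Sum>m\<in>M. (\<Sum>b\<in>B. g b m) * (\<Sum>c\<in>C. h c m))"
    by (rule sum.cong[OF refl]) (simp add: sum_product)
  finally show ?thesis .
qed

lemma Pol_vanish:
  fixes F :: "'a::{field,finite} poly \<Rightarrow> 'a poly poly"
  assumes "Pol n F" "n < D * (CARD('a) - 1)"
  shows "(\<Sum>a\<in>PP D. F a) = 0"
  using assms
proof (induction D arbitrary: n F)
  case 0 then show ?case by simp
next
  case (Suc D)
  obtain Q where Q: "\<forall>b. degree (Q b) \<le> n" "\<forall>m. Pol (n - m) (\<lambda>b. coeff (Q b) m)"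
    "\<forall>b c. F (b + monom c D) = poly (Q b) (cc c)"
    using Pol_decomp[OF Suc.prems(1), of D] by blast
  have "(\<Sum>a\<in>PP (Suc D). F a) = (\<Sum>b\<in>PP D. \<Sum>c\<in>UNIV. poly (Q b) (cc c))"
    by (simp add: sum_PP_Suc Q(3))
  also have "\<dots> = (\<Sum>b\<in>PP D. \<Sum>c\<in>UNIV. \<Sum>m\<le>n. coeff (Q b) m * cc c ^ m)"
    using poly_le[OF Q(1)[rule_format]] by simp
  also have "\<dots> = (\<Sum>m\<le>n. (\<Sum>b\<in>PP D. coeff (Q b) m) * (\<Sum>c\<in>UNIV. cc c ^ m))"
    by (rule sum_swap3)
  also have "\<dots> = 0"
  proof (rule sum.neutral, rule ballI)
    fix m assume m: "m \<in> {..n}"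
    show "(\<Sum>b\<in>PP D. coeff (Q b) m) * (\<Sum>c\<in>UNIV. cc c ^ m) = 0"
    proof (cases "m < CARD('a) - 1")
      case True
      have "(\<Sum>c\<in>(UNIV::'a set). c ^ m) = 0"
      proof (cases "m = 0")
        case True then show ?thesis using card_zero_field[where 'a='a] by simp
      next
        case False then show ?thesis using sum_pow_small \<open>m < CARD('a) - 1\<close> by blast
      qed
      then have "(\<Sum>c\<in>(UNIV::'a set). cc c ^ m) = 0"
        by (metis (no_types, lifting) cc_eq0 cc_power cc_sum sum.cong)
      then show ?thesis by simp
    next
      case False
      have "n - m < D * (CARD('a) - 1)" using Suc.prems(2) False m by auto
      then have "(\<Sum>b\<in>PP D. coeff (Q b) m) = 0" using Suc.IH Q(2) by blast
      then show ?thesis by simp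
    qed
  qed
  finally show ?case .
qed

lemma coeff_chi: "coeff (chi_t a) i = [:coeff a i:]"
  by (simp add: chi_t_def coeff_map_poly)

lemma cc_mult_poly: "cc c * p = smult [:c:] p"
  by (simp add: cc_def)

lemma lin_chi: "lin chi_t"
  unfolding lin_def cc_mult_poly
proof (intro conjI allI)
  show "chi_t (a + b) = chi_t a + chi_t b" for a b :: "'a poly"
    by (rule poly_eqI) (simp add: coeff_chi)
  show "chi_t (smult c a) = smult [:c:] (chi_t a)" for c and a :: "'a poly"
    by (rule poly_eqI) (simp add: coeff_chi)
qed

lemma lin_const: "lin (\<lambda>a. [:a:])"
  unfolding lin_def cc_mult_poly by simp

lemma const_pow: fixes a :: "'a::comm_ring_1" shows "[:a ^ k:] = [:a:] ^ k"
proof (induction k)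
  case 0 then show ?case by (simp add: one_pCons)
next
  case (Suc k)
  have "[:a ^ Suc k:] = [:a:] * [:a ^ k:]" by simp
  then show ?case using Suc by (simp add: mult.commute)
qed

lemma Pol_affine_pow:
  assumes "Pol n G" "lin e"
  shows "Pol (n + j) (\<lambda>b. (K + e b) ^ j * G b)"
proof (induction j)
  case 0 then show ?case using assms(1) by simp
next
  case (Suc j)
  let ?H = "\<lambda>b. (K + e b) ^ j * G b"
  have "Pol (Suc (n + j)) (\<lambda>b. K * ?H b + e b * ?H b)"
    by (intro Pol.Padd Pol.Pmono Pol_cmult Pol.Pmult assms(2) Suc)
  moreover have "(\<lambda>b. K * ?H b + e b * ?H b) = (\<lambda>b. (K + e b) ^ Suc j * G b)"
    by (simp add: algebra_simps)
  ultimately show ?case by simp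
qed

definition FF :: "nat \<Rightarrow> nat \<Rightarrow> 'a::field poly \<Rightarrow> 'a poly poly" where
  "FF \<beta> k a = chi_t a ^ \<beta> * [:a ^ k:]"

lemma Pol_FF: "Pol (\<beta> + k) (\<lambda>b. FF \<beta> k (m0 + b))"
proof -
  have "Pol (0 + k) (\<lambda>b. ([:m0:] + [:b:]) ^ k * 1)"
    by (rule Pol_affine_pow[OF Pol.Pconst lin_const])
  then have "Pol (k + \<beta>) (\<lambda>b. (chi_t m0 + chi_t b) ^ \<beta> * (([:m0:] + [:b:]) ^ k * 1))"
    by (intro Pol_affine_pow lin_chi) simp
  moreover have "chi_t (m0 + b) = chi_t m0 + chi_t b" for b using lin_chi[unfolded lin_def] by blast
  ultimately show ?thesis
    by (simp add: FF_def const_pow add.commute)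
qed

lemma monic_img: "monic_deg d = (\<lambda>b. monom 1 d + b) ` PP d"
proof (rule equalityI)
  show "(\<lambda>b. monom 1 d + b) ` PP d \<subseteq> monic_deg d"
  proof clarify
    fix b assume b: "b \<in> PP d"
    have c: "coeff (monom 1 d + b) d = 1" using b by (simp add: PP_def)
    have "degree (monom 1 d + b) \<le> d" using b by (intro degree_le) (auto simp: PP_def coeff_monom)
    moreover have "d \<le> degree (monom 1 d + b)" using c by (intro le_degree) simp
    ultimately have "degree (monom 1 d + b) = d" by simp
    then show "monom 1 d + b \<in> monic_deg d" using c by (simp add: monic_deg_def)
  qed
next
  show "monic_deg d \<subseteq> (\<lambda>b. monom 1 d + b) ` PP d"
  proof
    fix a assume a: "a \<in> monic_deg d"
    have "a - monom 1 d \<in> PP d" using a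
      by (auto simp: PP_def monic_deg_def coeff_monom coeff_eq_0)
    then show "a \<in> (\<lambda>b. monom 1 d + b) ` PP d" by (intro image_eqI[of _ _ "a - monom 1 d"]) auto
  qed
qed

lemma S_d_eq: "S_d d \<beta> k = (\<Sum>b\<in>PP d. FF \<beta> k (monom 1 d + b))"
proof -
  have "inj_on (\<lambda>b. monom 1 d + b) (PP d :: 'a poly set)" by (rule inj_onI) simp
  then show ?thesis unfolding S_d_def monic_img FF_def by (simp add: sum.reindex)
qed

lemma finite_monic: "finite (monic_deg d :: 'a::{field,finite} poly set)"
  unfolding monic_img by (simp add: finite_PP)

lemma S_d_zero:
  assumes "\<beta> + k < d"
  shows "(S_d d \<beta> k :: 'a::{field,finite} poly poly) = 0"
proof -
  have "1 \<le> CARD('a) - 1" using card_ge2[where 'a='a] by simp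
  then have "d \<le> d * (CARD('a) - 1)" by (metis mult.right_neutral mult_le_mono2)
  then have lt: "\<beta> + k < d * (CARD('a) - 1)" using assms by linarith
  show ?thesis unfolding S_d_eq by (rule Pol_vanish[OF Pol_FF lt])
qed

lemma Sset_sub: "{d. (S_d d \<beta> k :: 'a::{field,finite} poly poly) \<noteq> 0} \<subseteq> {..\<beta> + k}"
  using S_d_zero by (auto simp: not_le[symmetric])

lemma L_val_sum:
  assumes "\<beta> + k \<le> N"
  shows "(L_val \<beta> k :: 'a::{field,finite} poly poly) = (\<Sum>d\<le>N. S_d d \<beta> k)"
proof -
  let ?S = "{d. (S_d d \<beta> k :: 'a poly poly) \<noteq> 0}"
  have sub: "?S \<subseteq> {..N}" using Sset_sub[where 'a='a, of \<beta> k] assms by auto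
  have "L_val \<beta> k = (\<Sum>d\<in>?S. (S_d d \<beta> k :: 'a poly poly))"
    unfolding L_val_def z_poly_def by (simp add: poly_sum poly_monom)
  also have "\<dots> = (\<Sum>d\<le>N. S_d d \<beta> k)"
    by (rule sum.mono_neutral_left) (use sub in auto)
  finally show ?thesis .
qed

lemma pderiv_sum': "pderiv (sum f A) = (\<Sum>x\<in>A. pderiv (f x))"
  by (induction A rule: infinite_finite_induct) (simp_all add: pderiv_add)

lemma deriv_sum:
  assumes "\<beta> + k \<le> N"
  shows "(z_deriv_at_1 \<beta> k :: 'a::{field,finite} poly poly) = - (\<Sum>d\<le>N. of_nat d * S_d d \<beta> k)"
proof -
  let ?S = "{d. (S_d d \<beta> k :: 'a poly poly) \<noteq> 0}"
  have sub: "?S \<subseteq> {..N}" using Sset_sub[where 'a='a, of \<beta> k] assms by auto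
  have "poly (pderiv (z_poly \<beta> k)) 1 = (\<Sum>d\<in>?S. of_nat d * (S_d d \<beta> k :: 'a poly poly))"
    unfolding z_poly_def by (simp add: poly_sum poly_monom pderiv_sum' pderiv_monom)
  also have "\<dots> = (\<Sum>d\<le>N. of_nat d * S_d d \<beta> k)"
    by (rule sum.mono_neutral_left) (use sub in auto)
  finally show ?thesis unfolding z_deriv_at_1_def by simp
qed

definition ev :: "'a::comm_ring_1 poly poly \<Rightarrow> 'a" where "ev X = poly (poly X 0) 0"

lemma ev_simps: "ev (X + Y) = ev X + ev Y" "ev (X * Y) = ev X * ev Y" "ev (- X) = - ev X"
  "ev (sum f A) = (\<Sum>a\<in>A. ev (f a))" "ev (of_nat n) = of_nat n"
  by (simp_all add: ev_def poly_sum)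

lemma ev_FF: "ev (FF \<beta> k a) = coeff a 0 ^ (\<beta> + k)"
proof -
  have "poly (chi_t a) 0 = [:coeff a 0:]" by (simp add: poly_0_coeff_0 coeff_chi)
  moreover have "poly a 0 = coeff a 0" by (simp add: poly_0_coeff_0)
  ultimately show ?thesis by (simp add: ev_def FF_def poly_mult poly_power power_add const_pow[symmetric])
qed

lemma ev_S:
  "ev (S_d d \<beta> k :: 'a::{field,finite} poly poly) =
     (if d = 0 then 1 else if d = 1 then (\<Sum>c\<in>(UNIV::'a set). c ^ (\<beta>+k)) else 0)"
proof -
  have e: "ev (S_d d \<beta> k :: 'a poly poly) = (\<Sum>b\<in>PP d. coeff (monom 1 d + b) 0 ^ (\<beta> + k))"
    unfolding S_d_eq by (simp add: ev_simps ev_FF)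
  show ?thesis
  proof (cases d)
    case 0 then show ?thesis using e by (simp add: PP_0)
  next
    case (Suc D)
    show ?thesis
    proof (cases D)
      case 0
      then show ?thesis using e Suc by (simp add: sum_PP_Suc PP_0 coeff_monom)
    next
      case (Suc D')
      have dd: "d = Suc (Suc D')" using \<open>d = Suc D\<close> Suc by simp
      have "(\<Sum>b\<in>PP d. coeff (monom 1 d + b) 0 ^ (\<beta> + k))
          = (\<Sum>b\<in>PP (Suc (Suc D')). coeff b 0 ^ (\<beta> + k))"
        unfolding dd by (intro sum.cong refl) (simp add: coeff_monom)
      also have "\<dots> = (\<Sum>b\<in>PP (Suc D'). \<Sum>c\<in>(UNIV::'a set). coeff (b + monom c (Suc D')) 0 ^ (\<beta> + k))"
        by (rule sum_PP_Suc)
      also have "\<dots> = (\<Sum>b\<in>PP (Suc D'). \<Sum>c\<in>(UNIV::'a set). coeff b 0 ^ (\<beta> + k))"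
        by (simp add: coeff_monom)
      also have "\<dots> = (\<Sum>b\<in>PP (Suc D'). of_nat CARD('a) * coeff b 0 ^ (\<beta> + k))"
        by simp
      also have "\<dots> = 0" by (simp add: card_zero_field)
      finally show ?thesis using e \<open>d = Suc D\<close> Suc by simp
    qed
  qed
qed

lemma ev_sum01:
  fixes N :: nat
  assumes "1 \<le> N"
  shows "(\<Sum>d\<le>N. (f d :: 'b::comm_ring_1) * (if d = 0 then 1 else if d = 1 then s else 0)) = f 0 + f 1 * s"
proof -
  have "(\<Sum>d\<le>N. f d * (if d = 0 then 1 else if d = 1 then s else 0))
      = (\<Sum>d\<in>{0,1}. f d * (if d = 0 then 1 else if d = 1 then s else 0))"
    by (rule sum.mono_neutral_right) (use assms in auto)
  then show ?thesis by simp
qed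

lemma FF_zero: "k > 0 \<Longrightarrow> FF \<beta> k 0 = 0" by (simp add: FF_def)

lemma FF_smult: "FF \<beta> k (smult c m) = cc c ^ (\<beta> + k) * FF \<beta> k m"
proof -
  have "chi_t (smult c m) = cc c * chi_t m" using lin_chi unfolding lin_def by blast
  moreover have "[:smult c m:] = cc c * [:m:]" using lin_const unfolding lin_def by blast
  ultimately have "FF \<beta> k (smult c m) = (cc c * chi_t m) ^ \<beta> * (cc c * [:m:]) ^ k"
    unfolding FF_def const_pow by (simp only:)
  also have "\<dots> = cc c ^ (\<beta> + k) * (chi_t m ^ \<beta> * [:m:] ^ k)"
    by (simp only: power_mult_distrib power_add mult_ac)
  finally show ?thesis unfolding FF_def const_pow .
qed

lemma L_dvd_zero:
  assumes k: "k > 0" and dv: "(CARD('a) - 1) dvd (\<beta> + k)"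
  shows "(L_val \<beta> k :: 'a::{field,finite} poly poly) = 0"
proof -
  define n where "n = \<beta> + k"
  define N where "N = n"
  define M where "M = {m :: 'a poly. lead_coeff m = 1 \<and> degree m \<le> N}"
  have q1: "1 \<le> CARD('a) - 1" using card_ge2[where 'a='a] by simp
  have "n < Suc N * (CARD('a) - 1)"
  proof -
    have "Suc N \<le> Suc N * (CARD('a) - 1)" using q1 by (metis mult.right_neutral mult_le_mono2)
    then show ?thesis unfolding N_def by simp
  qed
  moreover have "Pol n (\<lambda>b. FF \<beta> k (0 + b) :: 'a poly poly)" unfolding n_def by (rule Pol_FF)
  ultimately have h1: "(\<Sum>a\<in>PP (Suc N). FF \<beta> k (0 + a) :: 'a poly poly) = 0"
    by (intro Pol_vanish)
  have fin: "finite (PP (Suc N) :: 'a poly set)" by (rule finite_PP)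
  have h2: "(\<Sum>a\<in>PP (Suc N). FF \<beta> k a) = (\<Sum>a\<in>PP (Suc N) - {0}. FF \<beta> k a :: 'a poly poly)"
    using fin by (simp add: sum_diff1 FF_zero[OF k])
  have img: "PP (Suc N) - {0} = (\<lambda>(c,m). smult c m) ` ((UNIV - {0}) \<times> M)"
  proof (rule equalityI)
    show "(\<lambda>(c,m). smult c m) ` ((UNIV - {0}) \<times> M) \<subseteq> PP (Suc N) - {0}"
    proof
      fix x assume "x \<in> (\<lambda>(c,m). smult c m) ` ((UNIV - {0}) \<times> M)"
      then obtain c m where c: "c \<noteq> (0::'a)" and m: "m \<in> M" and x: "x = smult c m" by auto
      have "m \<noteq> 0" using m by (auto simp: M_def)
      then have "smult c m \<noteq> 0" using c by simp
      moreover have "smult c m \<in> PP (Suc N)" using m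
        by (auto simp: PP_def M_def intro!: coeff_eq_0)
      ultimately show "x \<in> PP (Suc N) - {0}" using x by simp
    qed
  next
    show "PP (Suc N) - {0} \<subseteq> (\<lambda>(c,m). smult c m) ` ((UNIV - {0}) \<times> M)"
    proof
      fix a :: "'a poly" assume a: "a \<in> PP (Suc N) - {0}"
      define c where "c = lead_coeff a"
      have c0: "c \<noteq> 0" using a by (simp add: c_def)
      have "degree a \<le> N" using a by (intro degree_le) (auto simp: PP_def)
      then have "smult (inverse c) a \<in> M" using c0 by (simp add: M_def c_def)
      moreover have "a = smult c (smult (inverse c) a)" using c0 by simp
      ultimately show "a \<in> (\<lambda>(c,m). smult c m) ` ((UNIV - {0}) \<times> M)"
        using c0 by (intro image_eqI[of _ _ "(c, smult (inverse c) a)"]) auto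
    qed
  qed
  have inj: "inj_on (\<lambda>(c,m). smult c m) ((UNIV - {0::'a}) \<times> M)"
  proof (rule inj_onI)
    fix x y assume xA: "x \<in> (UNIV - {0::'a}) \<times> M" and yA: "y \<in> (UNIV - {0::'a}) \<times> M"
      and eq0: "(\<lambda>(c,m). smult c m) x = (\<lambda>(c,m). smult c m) y"
    obtain c m where x: "x = (c, m)" by fastforce
    obtain c' m' where y: "y = (c', m')" by fastforce
    have c: "c \<noteq> 0" "c' \<noteq> 0" and m: "m \<in> M" "m' \<in> M" using xA yA x y by auto
    have eq: "smult c m = smult c' m'" using eq0 x y by simp
    have "lead_coeff (smult c m) = lead_coeff (smult c' m')" using eq by simp
    then have cc': "c = c'" using m c by (simp add: M_def)
    have "smult (inverse c) (smult c m) = smult (inverse c) (smult c' m')" using eq by simp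
    then have "m = m'" using c cc' by (simp add: smult_smult)
    then show "x = y" using cc' x y by simp
  qed
  have sumc: "(\<Sum>c\<in>UNIV - {0::'a}. c ^ n) = -1"
  proof -
    have "n > 0" using k by (simp add: n_def)
    have "(\<Sum>c\<in>(UNIV::'a set). c ^ n) = (\<Sum>c\<in>UNIV - {0::'a}. c ^ n) + 0 ^ n"
      by (simp add: sum_diff1)
    then show ?thesis using sum_pow_dvd[where 'a='a, OF \<open>n > 0\<close>] dv \<open>n > 0\<close> by (simp add: n_def zero_power)
  qed
  have finM: "finite M"
  proof -
    have "M \<subseteq> PP (Suc N)" by (auto simp: M_def PP_def intro!: coeff_eq_0)
    then show ?thesis using fin finite_subset by blast
  qed
  have h4: "(\<Sum>a\<in>PP (Suc N) - {0}. FF \<beta> k a) = cc (\<Sum>c\<in>UNIV - {0::'a}. c ^ n) * (\<Sum>m\<in>M. FF \<beta> k m)"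
  proof -
    have "(\<Sum>a\<in>PP (Suc N) - {0}. FF \<beta> k a) = (\<Sum>x\<in>(UNIV - {0}) \<times> M. FF \<beta> k ((\<lambda>(c,m). smult c m) x))"
      unfolding img by (rule sum.reindex[OF inj, unfolded comp_def])
    also have "\<dots> = (\<Sum>c\<in>UNIV - {0::'a}. \<Sum>m\<in>M. cc c ^ n * FF \<beta> k m)"
      by (simp add: sum.cartesian_product split_def FF_smult n_def)
    also have "\<dots> = cc (\<Sum>c\<in>UNIV - {0::'a}. c ^ n) * (\<Sum>m\<in>M. FF \<beta> k m)"
      by (simp add: sum_product)
    finally show ?thesis .
  qed
  have h6: "(\<Sum>m\<in>M. FF \<beta> k m) = (\<Sum>d\<le>N. S_d d \<beta> k)"
  proof -
    have Meq: "M = (\<Union>d\<in>{..N}. monic_deg d)" by (auto simp: M_def monic_deg_def)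
    then have "(\<Sum>m\<in>M. FF \<beta> k m) = (\<Sum>d\<le>N. \<Sum>m\<in>monic_deg d. FF \<beta> k m)"
    proof -
      have fm: "\<forall>i\<in>{..N}. finite (monic_deg i :: 'a poly set)" using finite_monic by blast
      have dj: "\<forall>i\<in>{..N}. \<forall>j\<in>{..N}. i \<noteq> j \<longrightarrow> monic_deg i \<inter> monic_deg j = ({} :: 'a poly set)"
        by (auto simp: monic_deg_def)
      show ?thesis unfolding Meq by (rule sum.UNION_disjoint[OF finite_atMost fm dj])
    qed
    then show ?thesis by (simp add: S_d_def FF_def)
  qed
  have "L_val \<beta> k = (\<Sum>d\<le>N. S_d d \<beta> k :: 'a poly poly)" by (rule L_val_sum) (simp add: N_def n_def)
  moreover have "(0 :: 'a poly poly) = - (\<Sum>d\<le>N. S_d d \<beta> k)"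
    using h1 h2 h4 h6 sumc by simp
  ultimately show ?thesis by (simp add: neg_equal_0_iff_equal)
qed

theorem theorem2p0p3:
  fixes \<beta> k :: nat
  assumes "k > 0"
  shows "((CARD('a) - 1) dvd (\<beta> + k) \<longrightarrow> (L_val \<beta> k :: 'a::{field,finite} poly poly) = 0)
       \<and> (\<not> (CARD('a) - 1) dvd (\<beta> + k) \<longrightarrow> (L_val \<beta> k :: 'a poly poly) \<noteq> 0)
       \<and> ((CARD('a) - 1) dvd (\<beta> + k) \<longrightarrow> (z_deriv_at_1 \<beta> k :: 'a poly poly) \<noteq> 0)"
proof (intro conjI impI)
  assume "(CARD('a) - 1) dvd (\<beta> + k)"
  then show "(L_val \<beta> k :: 'a poly poly) = 0" using L_dvd_zero assms by blast
next
  let ?s = "(\<Sum>c\<in>(UNIV::'a set). c ^ (\<beta>+k))"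
  define N where "N = \<beta> + k"
  have N1: "1 \<le> N" using assms by (simp add: N_def)
  have evS: "ev (S_d d \<beta> k :: 'a poly poly) = (if d = 0 then 1 else if d = 1 then ?s else 0)" for d
    by (rule ev_S)
  {
    assume nd: "\<not> (CARD('a) - 1) dvd (\<beta> + k)"
    have s0: "?s = 0" using sum_pow_nondvd[where 'a='a, OF _ nd] assms by simp
    have "ev (L_val \<beta> k :: 'a poly poly) = (\<Sum>d\<le>N. 1 * ev (S_d d \<beta> k :: 'a poly poly))"
      using L_val_sum[where 'a='a, of \<beta> k N] by (simp add: N_def ev_simps)
    also have "\<dots> = 1 + 1 * ?s" unfolding evS by (rule ev_sum01[OF N1])
    finally have "ev (L_val \<beta> k :: 'a poly poly) = 1" using s0 by simp
    then show "(L_val \<beta> k :: 'a poly poly) \<noteq> 0" by (auto simp: ev_def)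
  }
  {
    assume dv: "(CARD('a) - 1) dvd (\<beta> + k)"
    have s1: "?s = -1" using sum_pow_dvd[where 'a='a, OF _ dv] assms by simp
    have "ev (z_deriv_at_1 \<beta> k :: 'a poly poly) = - (\<Sum>d\<le>N. of_nat d * ev (S_d d \<beta> k :: 'a poly poly))"
      using deriv_sum[where 'a='a, of \<beta> k N] by (simp add: N_def ev_simps)
    also have "(\<Sum>d\<le>N. of_nat d * ev (S_d d \<beta> k :: 'a poly poly)) = of_nat 0 + of_nat 1 * ?s"
      unfolding evS by (rule ev_sum01[OF N1])
    finally have "ev (z_deriv_at_1 \<beta> k :: 'a poly poly) = 1" using s1 by simp
    then show "(z_deriv_at_1 \<beta> k :: 'a poly poly) \<noteq> 0" by (auto simp: ev_def)
  }
qed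

end
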